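(* Let $(\alpha_t)_{t\ge0}$ be a positive nonincreasing deterministic sequence, and let $(L_t)_{t\ge0}$ be real random variables adapted to a filtration $(\mathcal F_t)$. Suppose there are $T_0\ge0$, $\kappa>0$, $\lambda>0$ and a nonnegative random variable $Z$ with $D:=\mathbb E[e^{\lambda Z}]<\infty$ such that for all $t\ge T_0$: - almost surely on $\{L_t\ge0\}$, $\ \mathbb E[L_{t+1}-L_t\mid\mathcal F_t]\le-\alpha_t\kappa$; - for all $z\ge0$, almost surely $\mathbb P(|L_{t+1}-L_t|\ge\alpha_t z\mid\mathcal F_t)\le\mathbb P(Z\ge z)$. Let $$E:=\mathbb E\Big[\frac{e^{\lambda Z}-1-\lambda Z}{\lambda^2}\Big].$$ Then for all integers $t\ge\hat t\ge T_0$ and every $\eta>0$ with $\alpha_{\hat t}\eta\le\lambda$, almost surely $$\mathbb E[e^{\eta L_{t+1}}\mid\mathcal F_{\hat t}]\le e^{\eta L_{\hat t}}\prod_{k=\hat t}^{t}\rho_k+D\sum_{\tau=\hat t+1}^{t+1}\prod_{k=\tau}^{t}\rho_k, \qquad \rho_k:=e^{-\alpha_k\eta\kappa+\alpha_k^2\eta^2E},$$ where an empty product equals $1$. *)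

theory Defs
  imports "HOL-Probability.Probability"
begin

end

theory Submission
  imports Defs
begin


lemma nn_cond_le_const:
  assumes P: "prob_space M" and sub: "subalgebra M G" and f[measurable]: "f \<in> borel_measurable M"
    and c: "c \<ge> 0"
    and bound: "\<And>A. A \<in> sets G \<Longrightarrow> (\<integral>\<^sup>+x. indicator A x * f x \<partial>M) \<le> ennreal c * emeasure M A"
  shows "AE x in M. nn_cond_exp M G f x \<le> ennreal c"
proof (rule AE_upper_bound_inf_ennreal)
  interpret prob_space M by fact
  interpret finite_measure_subalgebra M G by unfold_locales (rule sub)
  fix d :: real assume d: "d > 0"
  let ?Y = "nn_cond_exp M G f"
  let ?A = "{x\<in>space M. ennreal (c+d) < ?Y x}"
  have sp: "space G = space M" using sub by (simp add: subalgebra_def)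
  have AG: "?A \<in> sets G"
  proof -
    have "{x\<in>space G. ennreal (c+d) < ?Y x} \<in> sets G" by measurable
    then show ?thesis using sp by simp
  qed
  then have AM[measurable]: "?A \<in> sets M" using sub by (auto simp: subalgebra_def)
  have "ennreal (c+d) * emeasure M ?A = (\<integral>\<^sup>+x. ennreal (c+d) * indicator ?A x \<partial>M)"
    by (simp add: nn_integral_cmult_indicator)
  also have "\<dots> \<le> (\<integral>\<^sup>+x. indicator ?A x * ?Y x \<partial>M)"
    by (intro nn_integral_mono) (auto simp: indicator_def less_imp_le)
  also have "\<dots> = (\<integral>\<^sup>+x. indicator ?A x * f x \<partial>M)"
    using AG by (intro nn_cond_exp_intg) auto
  also have "\<dots> \<le> ennreal c * emeasure M ?A" by (rule bound[OF AG])
  finally have "ennreal ((c+d) * measure M ?A) \<le> ennreal (c * measure M ?A)"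
    using c d by (simp add: emeasure_eq_measure ennreal_mult)
  then have "(c+d) * measure M ?A \<le> c * measure M ?A"
    using c by (subst (asm) ennreal_le_iff) auto
  then have "measure M ?A = 0" using d by (simp add: algebra_simps measure_nonneg antisym mult_le_0_iff)
  then have "AE x in M. x \<notin> ?A" using AM by (intro AE_I'[of ?A]) (auto simp: emeasure_eq_measure)
  from this AE_space show "AE x in M. ?Y x \<le> ennreal c + ennreal d"
    by eventually_elim (use c d in \<open>auto simp: not_less ennreal_plus\<close>)
qed


lemma floor_facts:
  assumes h: "h > 0" and v: "v \<ge> (0::real)"
  shows "real (nat \<lfloor>v/h\<rfloor>) * h \<le> v" "v < real (Suc (nat \<lfloor>v/h\<rfloor>)) * h"
proof -
  have nn: "0 \<le> \<lfloor>v/h\<rfloor>" using h v by simp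
  have r: "real (nat \<lfloor>v/h\<rfloor>) = of_int \<lfloor>v/h\<rfloor>" using nn by simp
  have "of_int \<lfloor>v/h\<rfloor> \<le> v/h" by (rule of_int_floor_le)
  then show "real (nat \<lfloor>v/h\<rfloor>) * h \<le> v" using h r by (simp add: le_divide_eq)
  have "v/h < of_int \<lfloor>v/h\<rfloor> + 1" by (rule real_of_int_floor_add_one_gt)
  then show "v < real (Suc (nat \<lfloor>v/h\<rfloor>)) * h" using h r by (simp add: divide_less_eq algebra_simps)
qed

definition Sfun :: "(real \<Rightarrow> real) \<Rightarrow> real \<Rightarrow> real \<Rightarrow> ennreal" where
  "Sfun g h v = ennreal (g 0) +
     (\<Sum>j. if real j * h \<le> v then ennreal (g (real (Suc j) * h) - g (real j * h)) else 0)"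

lemma Sfun_eq:
  assumes h: "h > 0" and v: "v \<ge> 0" and g: "mono g" "\<And>u. g u \<ge> 0"
  shows "Sfun g h v = ennreal (g (real (Suc (nat \<lfloor>v/h\<rfloor>)) * h))"
proof -
  define k where "k = nat \<lfloor>v/h\<rfloor>"
  have k1: "real k * h \<le> v" and k2: "v < real (Suc k) * h"
    using floor_facts[OF h v] unfolding k_def by auto
  let ?c = "\<lambda>j. g (real (Suc j) * h) - g (real j * h)"
  have cnn: "\<And>j. ?c j \<ge> 0"
  proof -
    fix j
    have "real j * h \<le> real (Suc j) * h" using h by (intro mult_right_mono) auto
    then have "g (real j * h) \<le> g (real (Suc j) * h)" by (rule monoD[OF g(1)])
    then show "?c j \<ge> 0" by simp
  qed
  have "(\<Sum>j. if real j * h \<le> v then ennreal (?c j) else 0) = (\<Sum>j<Suc k. if real j * h \<le> v then ennreal (?c j) else 0)"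
  proof (rule suminf_finite)
    fix j assume "j \<notin> {..<Suc k}"
    then have "real (Suc k) \<le> real j" by simp
    then have "real (Suc k) * h \<le> real j * h" using h by (intro mult_right_mono) auto
    then have "\<not> real j * h \<le> v" using k2 by linarith
    then show "(if real j * h \<le> v then ennreal (?c j) else 0) = 0" by (simp only: if_False)
  qed (rule finite_lessThan)
  also have "\<dots> = (\<Sum>j<Suc k. ennreal (?c j))"
  proof (rule sum.cong[OF refl])
    fix j assume "j \<in> {..<Suc k}"
    then have "real j \<le> real k" by simp
    then have "real j * h \<le> real k * h" using h by (intro mult_right_mono) auto
    then have "real j * h \<le> v" using k1 by linarith
    then show "(if real j * h \<le> v then ennreal (?c j) else 0) = ennreal (?c j)" by (simp only: if_True)
  qed
  also have "\<dots> = ennreal (\<Sum>j<Suc k. ?c j)" using cnn by (intro sum_ennreal) auto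
  also have "(\<Sum>j<Suc k. ?c j) = g (real (Suc k) * h) - g (real 0 * h)"
    by (rule sum_lessThan_telescope[where f="\<lambda>j. g (real j * h)"])
  finally have sm: "(\<Sum>j. if real j * h \<le> v then ennreal (?c j) else 0) = ennreal (g (real (Suc k) * h) - g 0)"
    by simp
  have m: "g 0 \<le> g (real (Suc k) * h)" using h by (intro monoD[OF g(1)]) simp
  have "ennreal (g 0) + ennreal (g (real (Suc k) * h) - g 0) = ennreal (g 0 + (g (real (Suc k) * h) - g 0))"
    using g(2) m by (intro ennreal_plus[symmetric]) auto
  then show ?thesis unfolding Sfun_def k_def[symmetric] sm by simp
qed

lemma Sfun_bounds:
  assumes h: "h > 0" and v: "v \<ge> 0" and g: "mono g" "\<And>u. g u \<ge> 0"
  shows "ennreal (g v) \<le> Sfun g h v" "Sfun g h v \<le> ennreal (g (v + h))"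
proof -
  define k where "k = nat \<lfloor>v/h\<rfloor>"
  have k1: "real k * h \<le> v" and k2: "v < real (Suc k) * h"
    using floor_facts[OF h v] unfolding k_def by auto
  have eq: "Sfun g h v = ennreal (g (real (Suc k) * h))" unfolding k_def by (rule Sfun_eq[OF assms])
  have "g v \<le> g (real (Suc k) * h)" using k2 by (intro monoD[OF g(1)]) simp
  then show "ennreal (g v) \<le> Sfun g h v" unfolding eq by (rule ennreal_leI)
  have "real (Suc k) * h \<le> v + h" using k1 by (simp add: algebra_simps)
  then have "g (real (Suc k) * h) \<le> g (v + h)" by (rule monoD[OF g(1)])
  then show "Sfun g h v \<le> ennreal (g (v + h))" unfolding eq by (rule ennreal_leI)
qed

lemma Sfun_meas[measurable]:
  assumes [measurable]: "W \<in> borel_measurable M"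
  shows "(\<lambda>x. Sfun g h (W x)) \<in> borel_measurable M"
  unfolding Sfun_def by measurable

lemma Sfun_int:
  assumes [measurable]: "W \<in> borel_measurable M" "B \<in> sets M"
  shows "(\<integral>\<^sup>+x. indicator B x * Sfun g h (W x) \<partial>M) = ennreal (g 0) * emeasure M B
     + (\<Sum>j. ennreal (g (real (Suc j) * h) - g (real j * h)) * emeasure M (B \<inter> {x\<in>space M. real j * h \<le> W x}))"
proof -
  let ?c = "\<lambda>j. g (real (Suc j) * h) - g (real j * h)"
  have "(\<integral>\<^sup>+x. indicator B x * Sfun g h (W x) \<partial>M) =
    (\<integral>\<^sup>+x. ennreal (g 0) * indicator B x + (\<Sum>j. ennreal (?c j) * indicator (B \<inter> {x\<in>space M. real j * h \<le> W x}) x) \<partial>M)"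
  proof (rule nn_integral_cong)
    fix x assume x: "x \<in> space M"
    have "indicator B x * Sfun g h (W x) = ennreal (g 0) * indicator B x +
       (\<Sum>j. indicator B x * (if real j * h \<le> W x then ennreal (?c j) else 0))"
      unfolding Sfun_def by (simp add: distrib_left ennreal_suminf_cmult mult.commute)
    also have "(\<lambda>j. indicator B x * (if real j * h \<le> W x then ennreal (?c j) else 0)) =
         (\<lambda>j. ennreal (?c j) * indicator (B \<inter> {x\<in>space M. real j * h \<le> W x}) x)"
      using x by (auto simp: indicator_def fun_eq_iff)
    finally show "indicator B x * Sfun g h (W x) = ennreal (g 0) * indicator B x + (\<Sum>j. ennreal (?c j) * indicator (B \<inter> {x\<in>space M. real j * h \<le> W x}) x)" .
  qed
  also have "\<dots> = (\<integral>\<^sup>+x. ennreal (g 0) * indicator B x \<partial>M) +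
       (\<integral>\<^sup>+x. (\<Sum>j. ennreal (?c j) * indicator (B \<inter> {x\<in>space M. real j * h \<le> W x}) x) \<partial>M)"
    by (rule nn_integral_add) auto
  also have "(\<integral>\<^sup>+x. (\<Sum>j. ennreal (?c j) * indicator (B \<inter> {x\<in>space M. real j * h \<le> W x}) x) \<partial>M)
      = (\<Sum>j. \<integral>\<^sup>+x. ennreal (?c j) * indicator (B \<inter> {x\<in>space M. real j * h \<le> W x}) x \<partial>M)"
    by (rule nn_integral_suminf) auto
  finally show ?thesis by (simp add: nn_integral_cmult_indicator)
qed


lemma disc_bound:
  fixes X Z :: "'a \<Rightarrow> real" and g :: "real \<Rightarrow> real" and h :: real
  assumes P: "prob_space M" and [measurable]: "X \<in> borel_measurable M" "Z \<in> borel_measurable M"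
    and Xnn: "\<And>x. x \<in> space M \<Longrightarrow> X x \<ge> 0" and Znn: "\<And>x. x \<in> space M \<Longrightarrow> Z x \<ge> 0"
    and A[measurable]: "A \<in> sets M"
    and tailA: "\<And>z. z \<ge> 0 \<Longrightarrow> emeasure M (A \<inter> {x\<in>space M. z \<le> X x}) \<le> emeasure M {x\<in>space M. z \<le> Z x} * emeasure M A"
    and g: "mono g" "\<And>u. g u \<ge> 0" and h: "h > 0"
  shows "(\<integral>\<^sup>+x. indicator A x * ennreal (g (X x)) \<partial>M) \<le> emeasure M A * (\<integral>\<^sup>+x. ennreal (g (Z x + h)) \<partial>M)"
proof -
  interpret prob_space M by fact
  let ?c = "\<lambda>j. ennreal (g (real (Suc j) * h) - g (real j * h))"
  have "(\<integral>\<^sup>+x. indicator A x * ennreal (g (X x)) \<partial>M) \<le> (\<integral>\<^sup>+x. indicator A x * Sfun g h (X x) \<partial>M)"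
    by (intro nn_integral_mono mult_left_mono Sfun_bounds(1)[OF h _ g] Xnn) auto
  also have "\<dots> = ennreal (g 0) * emeasure M A + (\<Sum>j. ?c j * emeasure M (A \<inter> {x\<in>space M. real j * h \<le> X x}))"
    by (rule Sfun_int) auto
  also have "\<dots> \<le> ennreal (g 0) * emeasure M A + (\<Sum>j. ?c j * (emeasure M {x\<in>space M. real j * h \<le> Z x} * emeasure M A))"
  proof (intro add_mono order_refl suminf_le mult_left_mono tailA)
    fix j show "0 \<le> real j * h" using h by simp
  qed auto
  also have "\<dots> = emeasure M A * (ennreal (g 0) * emeasure M (space M) + (\<Sum>j. ?c j * emeasure M (space M \<inter> {x\<in>space M. real j * h \<le> Z x})))"
  proof -
    have "(\<Sum>j. ?c j * (emeasure M {x\<in>space M. real j * h \<le> Z x} * emeasure M A)) =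
          (\<Sum>j. emeasure M A * (?c j * emeasure M (space M \<inter> {x\<in>space M. real j * h \<le> Z x})))"
      by (intro suminf_cong) (simp add: Int_absorb1 mult_ac)
    also have "\<dots> = emeasure M A * (\<Sum>j. ?c j * emeasure M (space M \<inter> {x\<in>space M. real j * h \<le> Z x}))"
      by (rule ennreal_suminf_cmult)
    finally show ?thesis by (simp add: distrib_left mult_ac emeasure_space_1)
  qed
  also have "ennreal (g 0) * emeasure M (space M) + (\<Sum>j. ?c j * emeasure M (space M \<inter> {x\<in>space M. real j * h \<le> Z x}))
      = (\<integral>\<^sup>+x. indicator (space M) x * Sfun g h (Z x) \<partial>M)"
    by (rule Sfun_int[symmetric]) auto
  also have "\<dots> \<le> (\<integral>\<^sup>+x. ennreal (g (Z x + h)) \<partial>M)"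
  proof (rule nn_integral_mono)
    fix x assume x: "x \<in> space M"
    then show "indicator (space M) x * Sfun g h (Z x) \<le> ennreal (g (Z x + h))"
      using Sfun_bounds(2)[OF h Znn[OF x] g] by simp
  qed
  finally show ?thesis by (simp add: mult_left_mono)
qed


lemma dom_limit:
  fixes X Z :: "'a \<Rightarrow> real" and g :: "real \<Rightarrow> real"
  assumes P: "prob_space M" and [measurable]: "X \<in> borel_measurable M" "Z \<in> borel_measurable M"
    and Xnn: "\<And>x. x \<in> space M \<Longrightarrow> X x \<ge> 0" and Znn: "\<And>x. x \<in> space M \<Longrightarrow> Z x \<ge> 0"
    and A[measurable]: "A \<in> sets M"
    and tailA: "\<And>z. z \<ge> 0 \<Longrightarrow> emeasure M (A \<inter> {x\<in>space M. z \<le> X x}) \<le> emeasure M {x\<in>space M. z \<le> Z x} * emeasure M A"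
    and g: "mono g" "\<And>u. g u \<ge> 0" and gc: "\<And>u. isCont g u"
    and int1: "integrable M (\<lambda>x. g (Z x + 1))"
  shows "(\<integral>\<^sup>+x. indicator A x * ennreal (g (X x)) \<partial>M) \<le> emeasure M A * ennreal (\<integral>x. g (Z x) \<partial>M)"
proof -
  interpret prob_space M by fact
  have gmeas[measurable]: "g \<in> borel_measurable borel"
    using gc by (intro borel_measurable_continuous_onI) (simp add: continuous_at_imp_continuous_on)
  define s where "s = (\<lambda>n x. g (Z x + inverse (real (Suc n))))"
  have sm[measurable]: "\<And>n. s n \<in> borel_measurable M" unfolding s_def by measurable
  have lim: "AE x in M. (\<lambda>n. s n x) \<longlonglongrightarrow> g (Z x)"
  proof (rule AE_I2)
    fix x
    have "(\<lambda>n. Z x + inverse (real (Suc n))) \<longlonglongrightarrow> Z x + 0"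
      by (intro tendsto_add tendsto_const LIMSEQ_inverse_real_of_nat)
    then show "(\<lambda>n. s n x) \<longlonglongrightarrow> g (Z x)" unfolding s_def
      using isCont_tendsto_compose[OF gc] by simp
  qed
  have bnd: "\<And>n. AE x in M. norm (s n x) \<le> g (Z x + 1)"
  proof (rule AE_I2)
    fix n x
    have "inverse (real (Suc n)) \<le> 1" by (simp add: inverse_le_1_iff)
    then have "s n x \<le> g (Z x + 1)" unfolding s_def by (intro monoD[OF g(1)]) simp
    then show "norm (s n x) \<le> g (Z x + 1)" using g(2)[of "Z x + inverse (real (Suc n))"] unfolding s_def by simp
  qed
  have intZ: "integrable M (\<lambda>x. g (Z x))"
    by (rule integrable_dominated_convergence[OF _ sm int1 lim bnd]) measurable
  have ints: "\<And>n. integrable M (s n)"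
    by (rule integrable_dominated_convergence2[OF _ sm int1 lim bnd]) measurable
  have conv: "(\<lambda>n. integral\<^sup>L M (s n)) \<longlonglongrightarrow> (\<integral>x. g (Z x) \<partial>M)"
    by (rule integral_dominated_convergence[OF _ sm int1 lim bnd]) measurable
  have le: "(\<integral>\<^sup>+x. indicator A x * ennreal (g (X x)) \<partial>M) \<le> ennreal (measure M A * integral\<^sup>L M (s n))" for n
  proof -
    have "(\<integral>\<^sup>+x. indicator A x * ennreal (g (X x)) \<partial>M) \<le> emeasure M A * (\<integral>\<^sup>+x. ennreal (s n x) \<partial>M)"
      unfolding s_def by (rule disc_bound[OF P _ _ Xnn Znn A tailA g]) auto
    also have "(\<integral>\<^sup>+x. ennreal (s n x) \<partial>M) = ennreal (integral\<^sup>L M (s n))"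
      by (rule nn_integral_eq_integral[OF ints]) (simp add: s_def g(2))
    moreover have "0 \<le> integral\<^sup>L M (s n)" unfolding s_def by (intro integral_nonneg_AE) (simp add: g(2))
    ultimately show ?thesis
      by (simp add: emeasure_eq_measure ennreal_mult)
  qed
  have "(\<lambda>n. ennreal (measure M A * integral\<^sup>L M (s n))) \<longlonglongrightarrow> ennreal (measure M A * (\<integral>x. g (Z x) \<partial>M))"
    by (intro tendsto_ennrealI tendsto_mult tendsto_const conv)
  then have "(\<integral>\<^sup>+x. indicator A x * ennreal (g (X x)) \<partial>M) \<le> ennreal (measure M A * (\<integral>x. g (Z x) \<partial>M))"
    using le by (intro LIMSEQ_le_const) auto
  also have "\<dots> = emeasure M A * ennreal (\<integral>x. g (Z x) \<partial>M)"
    using integral_nonneg_AE[of "\<lambda>x. g (Z x)" M] g(2) by (simp add: emeasure_eq_measure ennreal_mult)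
  finally show ?thesis .
qed



locale lem4_setting =
  fixes M :: "'a measure" and F :: "nat \<Rightarrow> 'a measure" and \<alpha> :: "nat \<Rightarrow> real"
    and L :: "nat \<Rightarrow> 'a \<Rightarrow> real" and Z :: "'a \<Rightarrow> real" and T0 :: nat and lam :: real
  assumes M: "prob_space M"
    and F_sub: "\<And>s. subalgebra M (F s)"
    and F_mono: "\<And>s u. s \<le> u \<Longrightarrow> sets (F s) \<subseteq> sets (F u)"
    and \<alpha>_pos: "\<And>s. \<alpha> s > 0"
    and L_adapted: "\<And>s. L s \<in> borel_measurable (F s)"
    and lam_pos: "lam > 0"
    and Z_meas: "Z \<in> borel_measurable M"
    and Z_nonneg: "\<And>x. x \<in> space M \<Longrightarrow> Z x \<ge> 0"
    and Z_exp: "integrable M (\<lambda>x. exp (lam * Z x))"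
    and tail: "\<And>s z. s \<ge> T0 \<Longrightarrow> z \<ge> 0 \<Longrightarrow> AE x in M.
                  real_cond_exp M (F s)
                    (indicator {y \<in> space M. \<bar>L (Suc s) y - L s y\<bar> \<ge> \<alpha> s * z}) x
                  \<le> measure M {y \<in> space M. Z y \<ge> z}"
begin

sublocale prob_space M by (rule M)

lemma L_meas[measurable]: "L s \<in> borel_measurable M"
  by (rule measurable_from_subalg[OF F_sub L_adapted])

lemma Z_meas'[measurable]: "Z \<in> borel_measurable M" by (rule Z_meas)

lemma tail_set:
  assumes s: "s \<ge> T0" and z: "z \<ge> 0" and A: "A \<in> sets (F s)"
  shows "emeasure M (A \<inter> {x\<in>space M. z \<le> \<bar>L (Suc s) x - L s x\<bar> / \<alpha> s})
     \<le> emeasure M {x\<in>space M. z \<le> Z x} * emeasure M A"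
proof -
  interpret finite_measure_subalgebra M "F s" by unfold_locales (rule F_sub)
  define B where "B = {y \<in> space M. \<bar>L (Suc s) y - L s y\<bar> \<ge> \<alpha> s * z}"
  define p where "p = measure M {y \<in> space M. Z y \<ge> z}"
  have BM[measurable]: "B \<in> sets M" unfolding B_def by measurable
  have AM[measurable]: "A \<in> sets M" using A F_sub by (auto simp: subalgebra_def)
  have AF[measurable]: "indicator A \<in> borel_measurable (F s)" using A by measurable
  have setEq: "{x\<in>space M. z \<le> \<bar>L (Suc s) x - L s x\<bar> / \<alpha> s} = B"
    unfolding B_def using \<alpha>_pos[of s] by (auto simp: le_divide_eq mult.commute)
  have "integrable M (indicator (A \<inter> B) :: _ \<Rightarrow> real)"
    by (rule integrable_real_indicator) (auto simp: less_top[symmetric])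
  then have intAB: "integrable M (\<lambda>x. indicator A x * (indicator B x :: real))"
    by (simp add: indicator_inter_arith[symmetric])
  have eq: "(\<integral>x. indicator A x * real_cond_exp M (F s) (indicator B) x \<partial>M) = (\<integral>x. indicator A x * indicator B x \<partial>M)"
    by (rule real_cond_exp_intg(2)[OF intAB]) auto
  have int1: "integrable M (\<lambda>x. indicator A x * real_cond_exp M (F s) (indicator B) x)"
    by (rule real_cond_exp_intg(1)[OF intAB]) auto
  have "(\<integral>x. indicator A x * real_cond_exp M (F s) (indicator B) x \<partial>M) \<le> (\<integral>x. indicator A x * p \<partial>M)"
  proof (rule integral_mono_AE[OF int1])
    have "integrable M (indicator A :: _ \<Rightarrow> real)"
      by (rule integrable_real_indicator) (auto simp: less_top[symmetric])
    then show "integrable M (\<lambda>x. indicator A x * p)" by simp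
    show "AE x in M. indicator A x * real_cond_exp M (F s) (indicator B) x \<le> indicator A x * p"
      using tail[OF s z] unfolding B_def p_def by eventually_elim (auto simp: indicator_def)
  qed
  then have "measure M (A \<inter> B) \<le> p * measure M A"
    using eq by (simp add: indicator_inter_arith[symmetric] mult.commute)
  then have "ennreal (measure M (A \<inter> B)) \<le> ennreal (p * measure M A)" by (rule ennreal_leI)
  then show ?thesis unfolding setEq p_def
    by (simp add: emeasure_eq_measure ennreal_mult)
qed

end

lemma phi_series: "(\<lambda>n. x^(n+2) / fact (n+2)) sums (exp x - 1 - (x::real))"
proof -
  have "(\<lambda>n. x^n /\<^sub>R fact n) sums exp x" by (rule exp_converges)
  from sums_split_initial_segment[OF this, of 2]
  show ?thesis by (simp add: numeral_2_eq_2 divide_inverse mult.commute diff_diff_eq)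
qed

lemma phi_scale:
  fixes t y :: real assumes "0 \<le> t" "t \<le> 1" "0 \<le> y"
  shows "exp (t*y) - 1 - t*y \<le> t^2 * (exp y - 1 - y)"
proof -
  have s1: "(\<lambda>n. (t*y)^(n+2) / fact (n+2)) sums (exp (t*y) - 1 - t*y)" by (rule phi_series)
  have s2: "(\<lambda>n. t^2 * (y^(n+2) / fact (n+2))) sums (t^2 * (exp y - 1 - y))"
    by (rule sums_mult[OF phi_series])
  show ?thesis
  proof (rule sums_le[OF _ s1 s2])
    fix n
    have "t^(n+2) \<le> t^2" using assms power_decreasing[of 2 "n+2" t] by simp
    then have "t^(n+2) * y^(n+2) \<le> t^2 * y^(n+2)" using assms by (intro mult_right_mono) auto
    then have "(t*y)^(n+2) / fact (n+2) \<le> (t^2 * y^(n+2)) / fact (n+2)"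
      unfolding power_mult_distrib by (intro divide_right_mono) auto
    then show "(t*y)^(n+2) / fact (n+2) \<le> t^2 * (y^(n+2) / fact (n+2))"
      by simp
  qed
qed

lemma sinh_ge: fixes a :: real assumes "0 \<le> a" shows "2*a \<le> exp a - exp (-a)"
proof -
  have "(\<lambda>x. exp x - exp (-x) - 2*x) 0 \<le> (\<lambda>x. exp x - exp (-x) - 2*x) a"
  proof (rule DERIV_nonneg_imp_nondecreasing[OF assms])
    fix x :: real
    have "(exp (x/2) - exp (-x/2))^2 \<ge> 0" by simp
    moreover have "(exp (x/2) - exp (-x/2))^2 = exp x + exp (-x) - 2"
      by (simp add: power2_eq_square algebra_simps flip: exp_add)
    ultimately have "0 \<le> exp x + exp (-x) - 2" by linarith
    moreover have "DERIV (\<lambda>x. exp x - exp (-x) - 2*x) x :> exp x + exp (-x) - 2"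
      by (auto intro!: derivative_eq_intros)
    ultimately show "\<exists>y. DERIV (\<lambda>x. exp x - exp (-x) - 2*x) x :> y \<and> y \<ge> 0" by blast
  qed
  then show ?thesis by simp
qed

lemma phi_abs: fixes x :: real shows "exp x - 1 - x \<le> exp \<bar>x\<bar> - 1 - \<bar>x\<bar>"
proof (cases "x \<ge> 0")
  case False
  then show ?thesis using sinh_ge[of "-x"] by simp
qed simp

lemma phi_mono:
  fixes a b :: real assumes "0 \<le> a" "a \<le> b"
  shows "exp a - 1 - a \<le> exp b - 1 - b"
proof -
  have "exp b = exp a * exp (b - a)" by (simp add: exp_diff)
  also have "exp a * (1 + (b - a)) \<le> exp a * exp (b-a)"
    by (intro mult_left_mono) (auto simp: exp_ge_add_one_self)
  finally have "exp b \<ge> exp a + exp a * (b - a)" by (simp add: algebra_simps)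
  moreover have "exp a * (b - a) \<ge> 1 * (b - a)" using assms by (intro mult_right_mono) auto
  ultimately show ?thesis by simp
qed

lemma phi_nonneg: "0 \<le> (x::real) \<Longrightarrow> 0 \<le> exp x - 1 - x"
  using phi_mono[of 0 x] by simp

context lem4_setting begin

lemma dom_cond:
  assumes s: "s \<ge> T0" and g: "mono g" "\<And>u. g u \<ge> 0" "\<And>u. isCont g u"
    and int1: "integrable M (\<lambda>x. g (Z x + 1))"
  shows "AE x in M. nn_cond_exp M (F s) (\<lambda>y. ennreal (g (\<bar>L (Suc s) y - L s y\<bar> / \<alpha> s))) x
           \<le> ennreal (\<integral>x. g (Z x) \<partial>M)"
proof (rule nn_cond_le_const[OF M F_sub])
  have gmeas[measurable]: "g \<in> borel_measurable borel"
    using g(3) by (intro borel_measurable_continuous_onI) (simp add: continuous_at_imp_continuous_on)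
  show "(\<lambda>y. ennreal (g (\<bar>L (Suc s) y - L s y\<bar> / \<alpha> s))) \<in> borel_measurable M" by measurable
  show "0 \<le> (\<integral>x. g (Z x) \<partial>M)" by (intro integral_nonneg_AE) (simp add: g(2))
  fix A assume A: "A \<in> sets (F s)"
  then have AM: "A \<in> sets M" using F_sub by (auto simp: subalgebra_def)
  have "(\<integral>\<^sup>+x. indicator A x * ennreal (g (\<bar>L (Suc s) x - L s x\<bar> / \<alpha> s)) \<partial>M)
      \<le> emeasure M A * ennreal (\<integral>x. g (Z x) \<partial>M)"
    by (rule dom_limit[OF M _ Z_meas _ Z_nonneg AM tail_set[OF s _ A] g int1]) (auto simp: less_imp_le[OF \<alpha>_pos])
  then show "(\<integral>\<^sup>+x. indicator A x * ennreal (g (\<bar>L (Suc s) x - L s x\<bar> / \<alpha> s)) \<partial>M)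
      \<le> ennreal (\<integral>x. g (Z x) \<partial>M) * emeasure M A" by (simp add: mult.commute)
qed

lemma int_expZ:
  assumes "0 \<le> c" "c \<le> lam" shows "integrable M (\<lambda>x. exp (c * (Z x + 1)))"
proof (rule Bochner_Integration.integrable_bound[OF integrable_mult_right[OF Z_exp, of "exp c"]])
  show "(\<lambda>x. exp (c * (Z x + 1))) \<in> borel_measurable M" by measurable
  show "AE x in M. norm (exp (c * (Z x + 1))) \<le> norm (exp c * exp (lam * Z x))"
  proof (rule AE_I2)
    fix x assume x: "x \<in> space M"
    have "c * Z x \<le> lam * Z x" using assms Z_nonneg[OF x] by (intro mult_right_mono) auto
    then have "exp (c * (Z x + 1)) \<le> exp (lam * Z x + c)" by (simp add: algebra_simps)
    then show "norm (exp (c * (Z x + 1))) \<le> norm (exp c * exp (lam * Z x))" by (simp add: exp_add mult.commute)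
  qed
qed

lemma int_expZ0:
  assumes "0 \<le> c" "c \<le> lam" shows "integrable M (\<lambda>x. exp (c * Z x))"
proof (rule Bochner_Integration.integrable_bound[OF Z_exp])
  show "(\<lambda>x. exp (c * Z x)) \<in> borel_measurable M" by measurable
  show "AE x in M. norm (exp (c * Z x)) \<le> norm (exp (lam * Z x))"
  proof (rule AE_I2)
    fix x assume x: "x \<in> space M"
    have "c * Z x \<le> lam * Z x" using assms Z_nonneg[OF x] by (intro mult_right_mono) auto
    then show "norm (exp (c * Z x)) \<le> norm (exp (lam * Z x))" by simp
  qed
qed

lemma exp_bound:
  assumes s: "s \<ge> T0" and \<eta>: "\<eta> > 0" and sm: "\<alpha> s * \<eta> \<le> lam"
  shows "AE x in M. nn_cond_exp M (F s) (\<lambda>y. ennreal (exp (\<eta> * \<bar>L (Suc s) y - L s y\<bar>))) x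
           \<le> ennreal (\<integral>x. exp (lam * Z x) \<partial>M)"
proof -
  define c where "c = \<eta> * \<alpha> s"
  have c: "0 \<le> c" "c \<le> lam" using \<eta> \<alpha>_pos[of s] sm by (auto simp: c_def mult.commute)
  define g where "g = (\<lambda>u. exp (c * u))"
  have g: "mono g" "\<And>u. g u \<ge> 0" "\<And>u. isCont g u"
    using c unfolding g_def by (auto intro!: monoI mult_left_mono)
  have "AE x in M. nn_cond_exp M (F s) (\<lambda>y. ennreal (g (\<bar>L (Suc s) y - L s y\<bar> / \<alpha> s))) x
           \<le> ennreal (\<integral>x. g (Z x) \<partial>M)"
    by (rule dom_cond[OF s g]) (use int_expZ[OF c] in \<open>simp add: g_def\<close>)
  moreover have "(\<lambda>y. ennreal (g (\<bar>L (Suc s) y - L s y\<bar> / \<alpha> s))) = (\<lambda>y. ennreal (exp (\<eta> * \<bar>L (Suc s) y - L s y\<bar>)))"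
    using \<alpha>_pos[of s] by (simp add: g_def c_def fun_eq_iff)
  moreover have "(\<integral>x. g (Z x) \<partial>M) \<le> (\<integral>x. exp (lam * Z x) \<partial>M)"
  proof (rule integral_mono_AE[OF _ Z_exp])
    show "integrable M (\<lambda>x. g (Z x))" unfolding g_def by (rule int_expZ0[OF c])
    show "AE x in M. g (Z x) \<le> exp (lam * Z x)"
      using c Z_nonneg by (auto simp: g_def intro!: AE_I2 mult_right_mono)
  qed
  ultimately show ?thesis by (auto elim!: eventually_mono intro: order_trans)
qed

end

context lem4_setting begin

lemma int_phiZ: "integrable M (\<lambda>x. exp (lam * Z x) - 1 - lam * Z x)"
proof (rule Bochner_Integration.integrable_bound[OF Z_exp])
  show "(\<lambda>x. exp (lam * Z x) - 1 - lam * Z x) \<in> borel_measurable M" by measurable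
  show "AE x in M. norm (exp (lam * Z x) - 1 - lam * Z x) \<le> norm (exp (lam * Z x))"
  proof (rule AE_I2)
    fix x assume x: "x \<in> space M"
    have "0 \<le> lam * Z x" using lam_pos Z_nonneg[OF x] by simp
    then show "norm (exp (lam * Z x) - 1 - lam * Z x) \<le> norm (exp (lam * Z x))"
      using phi_nonneg[of "lam * Z x"] by simp
  qed
qed

lemma phi_bound:
  assumes s: "s \<ge> T0" and \<eta>: "\<eta> > 0" and sm: "\<alpha> s * \<eta> \<le> lam"
  shows "AE x in M. nn_cond_exp M (F s) (\<lambda>y. ennreal (exp (\<eta> * \<bar>L (Suc s) y - L s y\<bar>) - 1 - \<eta> * \<bar>L (Suc s) y - L s y\<bar>)) x
           \<le> ennreal ((\<alpha> s)^2 * \<eta>^2 * (\<integral>x. (exp (lam * Z x) - 1 - lam * Z x) / lam^2 \<partial>M))"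
proof -
  define c where "c = \<eta> * \<alpha> s"
  have c: "0 \<le> c" "c \<le> lam" using \<eta> \<alpha>_pos[of s] sm by (auto simp: c_def mult.commute)
  define g where "g = (\<lambda>u. exp (c * max u 0) - 1 - c * max u 0)"
  have gm: "mono g"
  proof (rule monoI)
    fix u v :: real assume "u \<le> v"
    then have "c * max u 0 \<le> c * max v 0" using c by (intro mult_left_mono) auto
    then show "g u \<le> g v" unfolding g_def using c by (intro phi_mono) auto
  qed
  have gnn: "\<And>u. g u \<ge> 0"
  proof -
    fix u
    have "0 \<le> c * max u 0" using c by simp
    then show "g u \<ge> 0" unfolding g_def by (rule phi_nonneg)
  qed
  have g: "mono g" "\<And>u. g u \<ge> 0" "\<And>u. isCont g u"
    using gm gnn unfolding g_def by (auto intro!: continuous_intros)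
  have int1: "integrable M (\<lambda>x. g (Z x + 1))"
  proof (rule Bochner_Integration.integrable_bound[OF int_expZ[OF c]])
    show "(\<lambda>x. g (Z x + 1)) \<in> borel_measurable M" unfolding g_def by measurable
    show "AE x in M. norm (g (Z x + 1)) \<le> norm (exp (c * (Z x + 1)))"
    proof (rule AE_I2)
      fix x assume x: "x \<in> space M"
      have "0 \<le> c * (Z x + 1)" using c Z_nonneg[OF x] by simp
      then show "norm (g (Z x + 1)) \<le> norm (exp (c * (Z x + 1)))"
        using g(2)[of "Z x + 1"] Z_nonneg[OF x] unfolding g_def by simp
    qed
  qed
  have "AE x in M. nn_cond_exp M (F s) (\<lambda>y. ennreal (g (\<bar>L (Suc s) y - L s y\<bar> / \<alpha> s))) x
           \<le> ennreal (\<integral>x. g (Z x) \<partial>M)"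
    by (rule dom_cond[OF s g int1])
  note ae = this
  have eqf: "(\<lambda>y. ennreal (g (\<bar>L (Suc s) y - L s y\<bar> / \<alpha> s))) =
      (\<lambda>y. ennreal (exp (\<eta> * \<bar>L (Suc s) y - L s y\<bar>) - 1 - \<eta> * \<bar>L (Suc s) y - L s y\<bar>))"
    using \<alpha>_pos[of s] by (simp add: g_def c_def fun_eq_iff)
  have le: "(\<integral>x. g (Z x) \<partial>M) \<le> (\<alpha> s)^2 * \<eta>^2 * (\<integral>x. (exp (lam * Z x) - 1 - lam * Z x) / lam^2 \<partial>M)"
  proof -
    define t where "t = c / lam"
    have t: "0 \<le> t" "t \<le> 1" using c lam_pos by (auto simp: t_def)
    have "(\<integral>x. g (Z x) \<partial>M) \<le> (\<integral>x. t^2 * (exp (lam * Z x) - 1 - lam * Z x) \<partial>M)"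
    proof (rule integral_mono_AE)
      show "integrable M (\<lambda>x. g (Z x))"
      proof (rule Bochner_Integration.integrable_bound[OF int_expZ0[OF c]])
        show "(\<lambda>x. g (Z x)) \<in> borel_measurable M" unfolding g_def by measurable
        show "AE x in M. norm (g (Z x)) \<le> norm (exp (c * Z x))"
        proof (rule AE_I2)
          fix x assume x: "x \<in> space M"
          have "0 \<le> c * Z x" using c Z_nonneg[OF x] by simp
          then show "norm (g (Z x)) \<le> norm (exp (c * Z x))"
            using g(2)[of "Z x"] Z_nonneg[OF x] unfolding g_def by simp
        qed
      qed
      show "integrable M (\<lambda>x. t^2 * (exp (lam * Z x) - 1 - lam * Z x))"
        using int_phiZ by simp
      show "AE x in M. g (Z x) \<le> t^2 * (exp (lam * Z x) - 1 - lam * Z x)"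
      proof (rule AE_I2)
        fix x assume x: "x \<in> space M"
        have e: "c * Z x = t * (lam * Z x)" using lam_pos by (simp add: t_def)
        have mx: "max (Z x) 0 = Z x" using Z_nonneg[OF x] by simp
        have "exp (t * (lam * Z x)) - 1 - t * (lam * Z x) \<le> t^2 * (exp (lam * Z x) - 1 - lam * Z x)"
          using phi_scale[OF t, of "lam * Z x"] lam_pos Z_nonneg[OF x] by simp
        then show "g (Z x) \<le> t^2 * (exp (lam * Z x) - 1 - lam * Z x)"
          unfolding g_def mx e .
      qed
    qed
    also have "\<dots> = t^2 * (\<integral>x. exp (lam * Z x) - 1 - lam * Z x \<partial>M)" by simp
    also have "\<dots> = (\<alpha> s)^2 * \<eta>^2 * (\<integral>x. (exp (lam * Z x) - 1 - lam * Z x) / lam^2 \<partial>M)"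
      using lam_pos by (simp add: t_def c_def power_divide power_mult_distrib)
    finally show ?thesis .
  qed
  from ae[unfolded eqf] show ?thesis
    by eventually_elim (rule order_trans[OF _ ennreal_leI[OF le]])
qed

end

context lem4_setting begin

lemma rce_nn:
  assumes [measurable]: "f \<in> borel_measurable M" and nn: "\<And>y. y \<in> space M \<Longrightarrow> f y \<ge> 0"
  shows "AE x in M. real_cond_exp M (F s) f x = enn2real (nn_cond_exp M (F s) (\<lambda>y. ennreal (f y)) x)"
proof -
  interpret finite_measure_subalgebra M "F s" by unfold_locales (rule F_sub)
  have "AE x in M. nn_cond_exp M (F s) (\<lambda>y. ennreal (- f y)) x = nn_cond_exp M (F s) (\<lambda>y. 0) x"
    by (rule nn_cond_exp_cong) (auto simp: nn ennreal_neg)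
  moreover have "AE x in M. 0 = nn_cond_exp M (F s) (\<lambda>y. 0) x"
    by (rule nn_cond_exp_F_meas) auto
  ultimately show ?thesis unfolding real_cond_exp_def by eventually_elim simp
qed

lemma one_step:
  fixes \<kappa> \<eta> :: real
  assumes s: "s \<ge> T0" and \<eta>: "\<eta> > 0" and sm: "\<alpha> s * \<eta> \<le> lam"
    and drift: "AE x in M. L s x \<ge> 0 \<longrightarrow>
                  real_cond_exp M (F s) (\<lambda>y. L (Suc s) y - L s y) x \<le> - \<alpha> s * \<kappa>"
  shows "AE x in M. nn_cond_exp M (F s) (\<lambda>y. ennreal (exp (\<eta> * L (Suc s) y))) x
     \<le> ennreal (exp (- \<alpha> s * \<eta> * \<kappa> + (\<alpha> s)\<^sup>2 * \<eta>\<^sup>2 * (\<integral>x. (exp (lam * Z x) - 1 - lam * Z x) / lam\<^sup>2 \<partial>M))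
                * exp (\<eta> * L s x) + (\<integral>x. exp (lam * Z x) \<partial>M))"
proof -
  interpret finite_measure_subalgebra M "F s" by unfold_locales (rule F_sub)
  define D where "D = (\<integral>x. exp (lam * Z x) \<partial>M)"
  define E where "E = (\<integral>x. (exp (lam * Z x) - 1 - lam * Z x) / lam\<^sup>2 \<partial>M)"
  define \<rho> where "\<rho> = exp (- \<alpha> s * \<eta> * \<kappa> + (\<alpha> s)\<^sup>2 * \<eta>\<^sup>2 * E)"
  define \<Delta> where "\<Delta> = (\<lambda>y. L (Suc s) y - L s y)"
  define W where "W = (\<lambda>y. exp (\<eta> * \<Delta> y))"
  define P where "P = (\<lambda>y. exp (\<eta> * \<bar>\<Delta> y\<bar>))"
  define \<Phi> where "\<Phi> = (\<lambda>y. exp (\<eta> * \<bar>\<Delta> y\<bar>) - 1 - \<eta> * \<bar>\<Delta> y\<bar>)"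
  have [measurable]: "\<Delta> \<in> borel_measurable M" "W \<in> borel_measurable M" "P \<in> borel_measurable M"
     "\<Phi> \<in> borel_measurable M" unfolding \<Delta>_def W_def P_def \<Phi>_def by measurable
  have D0: "D \<ge> 0" unfolding D_def by (intro integral_nonneg_AE) auto
  have E0: "E \<ge> 0" unfolding E_def
    by (intro integral_nonneg_AE AE_I2 divide_nonneg_pos phi_nonneg) (use lam_pos Z_nonneg in auto)
  have nnP: "AE x in M. nn_cond_exp M (F s) (\<lambda>y. ennreal (P y)) x \<le> ennreal D"
    using exp_bound[OF s \<eta> sm] unfolding P_def \<Delta>_def D_def .
  have nnPhi: "AE x in M. nn_cond_exp M (F s) (\<lambda>y. ennreal (\<Phi> y)) x \<le> ennreal ((\<alpha> s)^2 * \<eta>^2 * E)"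
    using phi_bound[OF s \<eta> sm] unfolding \<Phi>_def \<Delta>_def E_def .
  have "(\<integral>\<^sup>+x. ennreal (P x) \<partial>M) = (\<integral>\<^sup>+x. 1 * nn_cond_exp M (F s) (\<lambda>y. ennreal (P y)) x \<partial>M)"
    by (subst nn_cond_exp_intg) auto
  also have "\<dots> \<le> (\<integral>\<^sup>+x. ennreal D \<partial>M)"
    using nnP by (intro nn_integral_mono_AE) auto
  also have "\<dots> < \<infinity>" by (simp add: emeasure_space_1)
  finally have intP: "integrable M P"
    by (intro integrableI_nonneg) (auto simp: P_def)
  have intW: "integrable M W"
    by (rule Bochner_Integration.integrable_bound[OF intP]) (use \<eta> in \<open>auto simp: W_def P_def intro!: AE_I2 mult_left_mono\<close>)
  have intPhi: "integrable M \<Phi>"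
  proof (rule Bochner_Integration.integrable_bound[OF intP])
    show "AE x in M. norm (\<Phi> x) \<le> norm (P x)"
    proof (rule AE_I2)
      fix x
      have "0 \<le> \<Phi> x" unfolding \<Phi>_def using \<eta> by (intro phi_nonneg) simp
      moreover have "0 \<le> \<eta> * \<bar>\<Delta> x\<bar>" using \<eta> by simp
      ultimately show "norm (\<Phi> x) \<le> norm (P x)" unfolding \<Phi>_def P_def by simp
    qed
  qed auto
  have intD: "integrable M \<Delta>"
  proof (rule Bochner_Integration.integrable_bound[OF integrable_divide[OF intP, of \<eta>]])
    show "AE x in M. norm (\<Delta> x) \<le> norm (P x / \<eta>)"
    proof (rule AE_I2)
      fix x
      have "1 + \<eta> * \<bar>\<Delta> x\<bar> \<le> P x" unfolding P_def by (rule exp_ge_add_one_self)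
      then have "\<bar>\<Delta> x\<bar> \<le> P x / \<eta>" using \<eta> by (simp add: le_divide_eq mult.commute)
      then show "norm (\<Delta> x) \<le> norm (P x / \<eta>)" using \<eta> by (simp add: P_def)
    qed
  qed auto
  have int1: "integrable M (\<lambda>x. 1::real)" by simp
  have r1: "AE x in M. real_cond_exp M (F s) W x \<le> real_cond_exp M (F s) (\<lambda>y. 1 + \<eta> * \<Delta> y + \<Phi> y) x"
  proof (rule real_cond_exp_mono)
    show "AE x in M. W x \<le> 1 + \<eta> * \<Delta> x + \<Phi> x"
    proof (rule AE_I2)
      fix x
      have "exp (\<eta> * \<Delta> x) - 1 - \<eta> * \<Delta> x \<le> exp \<bar>\<eta> * \<Delta> x\<bar> - 1 - \<bar>\<eta> * \<Delta> x\<bar>" by (rule phi_abs)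
      then show "W x \<le> 1 + \<eta> * \<Delta> x + \<Phi> x" unfolding W_def \<Phi>_def using \<eta> by (simp add: abs_mult)
    qed
    show "integrable M (\<lambda>y. 1 + \<eta> * \<Delta> y + \<Phi> y)" using intD intPhi by auto
  qed (rule intW)
  have r2: "AE x in M. real_cond_exp M (F s) (\<lambda>y. 1 + \<eta> * \<Delta> y + \<Phi> y) x
      = real_cond_exp M (F s) (\<lambda>y. 1 + \<eta> * \<Delta> y) x + real_cond_exp M (F s) \<Phi> x"
    by (rule real_cond_exp_add) (use intD intPhi in auto)
  have r3: "AE x in M. real_cond_exp M (F s) (\<lambda>y. 1 + \<eta> * \<Delta> y) x
      = real_cond_exp M (F s) (\<lambda>y. 1) x + real_cond_exp M (F s) (\<lambda>y. \<eta> * \<Delta> y) x"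
    by (rule real_cond_exp_add) (use intD in auto)
  have r4: "AE x in M. real_cond_exp M (F s) (\<lambda>y. 1) x = 1"
    by (rule real_cond_exp_F_meas) auto
  have r5: "AE x in M. real_cond_exp M (F s) (\<lambda>y. \<eta> * \<Delta> y) x = \<eta> * real_cond_exp M (F s) \<Delta> x"
    by (rule real_cond_exp_cmult[OF intD])
  have r6: "AE x in M. real_cond_exp M (F s) \<Phi> x = enn2real (nn_cond_exp M (F s) (\<lambda>y. ennreal (\<Phi> y)) x)"
  proof (rule rce_nn)
    fix y show "0 \<le> \<Phi> y" unfolding \<Phi>_def using \<eta> by (intro phi_nonneg) simp
  qed simp
  have r7: "AE x in M. real_cond_exp M (F s) W x = enn2real (nn_cond_exp M (F s) (\<lambda>y. ennreal (W y)) x)"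
    by (rule rce_nn) (auto simp: W_def)
  have r8: "AE x in M. nn_cond_exp M (F s) (\<lambda>y. ennreal (W y)) x \<le> nn_cond_exp M (F s) (\<lambda>y. ennreal (P y)) x"
    by (rule nn_cond_exp_mono) (use \<eta> in \<open>auto simp: W_def P_def intro!: AE_I2 mult_left_mono\<close>)
  have r9: "AE x in M. ennreal (exp (\<eta> * L s x)) * nn_cond_exp M (F s) (\<lambda>y. ennreal (W y)) x
      = nn_cond_exp M (F s) (\<lambda>y. ennreal (exp (\<eta> * L s y)) * ennreal (W y)) x"
    by (rule nn_cond_exp_prod) (use L_adapted in auto)
  have feq: "(\<lambda>y. ennreal (exp (\<eta> * L s y)) * ennreal (W y)) = (\<lambda>y. ennreal (exp (\<eta> * L (Suc s) y)))"
    by (auto simp: fun_eq_iff W_def \<Delta>_def ennreal_mult'[symmetric] exp_add[symmetric] algebra_simps)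
  have dr: "AE x in M. L s x \<ge> 0 \<longrightarrow> real_cond_exp M (F s) \<Delta> x \<le> - \<alpha> s * \<kappa>"
    using drift unfolding \<Delta>_def .
  from r1 r2 r3 r4 r5 r6 r7 r8 r9 dr nnP nnPhi
  show ?thesis unfolding feq D_def[symmetric] E_def[symmetric] \<rho>_def[symmetric]
  proof eventually_elim
    case (elim x)
    let ?N = "nn_cond_exp M (F s) (\<lambda>y. ennreal (W y)) x"
    have Nfin: "?N \<le> ennreal D" using elim(8) elim(11) by (rule order_trans)
    then have "?N \<noteq> \<top>" by (rule neq_top_trans[OF ennreal_neq_top])
    then have Neq: "?N = ennreal (real_cond_exp M (F s) W x)"
      using elim(7) by (simp add: ennreal_enn2real_if)
    show ?case
    proof (cases "L s x \<ge> 0")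
      case True
      have "enn2real (nn_cond_exp M (F s) (\<lambda>y. ennreal (\<Phi> y)) x) \<le> (\<alpha> s)^2 * \<eta>^2 * E"
        using elim(12) E0 by (simp add: enn2real_leI)
      then have "real_cond_exp M (F s) W x \<le> 1 + \<eta> * (- \<alpha> s * \<kappa>) + (\<alpha> s)^2 * \<eta>^2 * E"
      proof -
        have "\<eta> * real_cond_exp M (F s) \<Delta> x \<le> \<eta> * (- \<alpha> s * \<kappa>)"
          using elim(10) True \<eta> by (intro mult_left_mono) auto
        then show ?thesis using elim(1-6) \<open>enn2real _ \<le> _\<close> by linarith
      qed
      also have "\<dots> \<le> \<rho>" unfolding \<rho>_def
        using exp_ge_add_one_self[of "- \<alpha> s * \<eta> * \<kappa> + (\<alpha> s)\<^sup>2 * \<eta>\<^sup>2 * E"] by (simp add: algebra_simps)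
      finally have "?N \<le> ennreal \<rho>" unfolding Neq by (rule ennreal_leI)
      then have "ennreal (exp (\<eta> * L s x)) * ?N \<le> ennreal (exp (\<eta> * L s x)) * ennreal \<rho>"
        by (rule mult_left_mono) simp
      also have "\<dots> = ennreal (\<rho> * exp (\<eta> * L s x))" by (simp add: ennreal_mult'[symmetric] mult.commute \<rho>_def)
      also have "\<dots> \<le> ennreal (\<rho> * exp (\<eta> * L s x) + D)" using D0 by (intro ennreal_leI) simp
      finally show ?thesis using elim(9) by simp
    next
      case False
      have "\<eta> * L s x \<le> 0" using False \<eta> by (intro mult_nonneg_nonpos) auto
      then have "exp (\<eta> * L s x) \<le> 1" by simp
      then have "ennreal (exp (\<eta> * L s x)) * ?N \<le> 1 * ennreal D"
        using Nfin by (intro mult_mono) (auto simp: ennreal_leI[of _ 1, simplified])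
      also have "\<dots> \<le> ennreal (\<rho> * exp (\<eta> * L s x) + D)"
        unfolding mult_1 by (intro ennreal_leI) (simp add: \<rho>_def)
      finally show ?thesis using elim(9) by simp
    qed
  qed
qed

end


lemma prod_step: "(m::nat) \<le> Suc t \<Longrightarrow> (\<Prod>k=m..Suc t. r k) = r (Suc t) * (\<Prod>k=m..t. (r k :: real))"
  by (simp add: prod.nat_ivl_Suc' mult.commute)

lemma sum_prod_step:
  assumes "t' \<le> t"
  shows "(\<Sum>\<tau>=Suc t'..Suc (Suc t). \<Prod>k=\<tau>..Suc t. r k) = 1 + r (Suc t) * (\<Sum>\<tau>=Suc t'..Suc t. \<Prod>k=\<tau>..t. (r k :: real))"
proof -
  have "(\<Sum>\<tau>=Suc t'..Suc (Suc t). \<Prod>k=\<tau>..Suc t. r k) = (\<Prod>k=Suc (Suc t)..Suc t. r k) + (\<Sum>\<tau>=Suc t'..Suc t. \<Prod>k=\<tau>..Suc t. r k)"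
    using assms by (simp add: sum.nat_ivl_Suc')
  also have "(\<Prod>k=Suc (Suc t)..Suc t. r k) = 1" by simp
  also have "(\<Sum>\<tau>=Suc t'..Suc t. \<Prod>k=\<tau>..Suc t. r k) = (\<Sum>\<tau>=Suc t'..Suc t. r (Suc t) * (\<Prod>k=\<tau>..t. r k))"
    by (intro sum.cong refl prod_step) auto
  finally show ?thesis by (simp only: sum_distrib_left)
qed

lemma ennr_aux: "0 \<le> a \<Longrightarrow> 0 \<le> b \<Longrightarrow> 0 \<le> d \<Longrightarrow> ennreal a * ennreal b + ennreal d = ennreal (a * b + d)"
  by (simp add: ennreal_mult ennreal_plus)

context lem4_setting begin

lemma subalg_mono: "s \<le> u \<Longrightarrow> subalgebra (F u) (F s)"
  using F_sub[of s] F_sub[of u] F_mono[of s u] by (auto simp: subalgebra_def)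

lemma iterate:
  fixes \<kappa> \<eta> D E :: real and t' :: nat
  assumes \<eta>: "\<eta> > 0" and \<alpha>_mono: "antimono \<alpha>" and t': "T0 \<le> t'" and sm: "\<alpha> t' * \<eta> \<le> lam"
    and drift: "\<And>s. s \<ge> T0 \<Longrightarrow> AE x in M. L s x \<ge> 0 \<longrightarrow>
                  real_cond_exp M (F s) (\<lambda>y. L (Suc s) y - L s y) x \<le> - \<alpha> s * \<kappa>"
    and D_def: "D = (\<integral>x. exp (lam * Z x) \<partial>M)"
    and E_def: "E = (\<integral>x. (exp (lam * Z x) - 1 - lam * Z x) / lam\<^sup>2 \<partial>M)"
    and tt: "t' \<le> t"
  shows "AE x in M. nn_cond_exp M (F t') (\<lambda>y. ennreal (exp (\<eta> * L (Suc t) y))) x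
     \<le> ennreal (exp (\<eta> * L t' x) * (\<Prod>k=t'..t. exp (- \<alpha> k * \<eta> * \<kappa> + (\<alpha> k)\<^sup>2 * \<eta>\<^sup>2 * E))
                + D * (\<Sum>\<tau>=Suc t'..Suc t. \<Prod>k=\<tau>..t. exp (- \<alpha> k * \<eta> * \<kappa> + (\<alpha> k)\<^sup>2 * \<eta>\<^sup>2 * E)))"
  using tt
proof (induction t rule: dec_induct)
  case base
  have "AE x in M. nn_cond_exp M (F t') (\<lambda>y. ennreal (exp (\<eta> * L (Suc t') y))) x
     \<le> ennreal (exp (- \<alpha> t' * \<eta> * \<kappa> + (\<alpha> t')\<^sup>2 * \<eta>\<^sup>2 * E) * exp (\<eta> * L t' x) + D)"
    unfolding D_def E_def by (rule one_step[OF t' \<eta> sm drift[OF t']])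
  then show ?case by (simp add: mult.commute)
next
  case (step n)
  interpret finite_measure_subalgebra M "F t'" by unfold_locales (rule F_sub)
  let ?r = "\<lambda>k. exp (- \<alpha> k * \<eta> * \<kappa> + (\<alpha> k)\<^sup>2 * \<eta>\<^sup>2 * E)"
  have D0: "D \<ge> 0" unfolding D_def by (intro integral_nonneg_AE) auto
  have eqr: "\<And>x. ennreal (?r (Suc n) * exp (\<eta> * L (Suc n) x) + D) = ennreal (?r (Suc n)) * ennreal (exp (\<eta> * L (Suc n) x)) + ennreal D"
    using D0 by (simp add: ennreal_plus ennreal_mult)
  have sn: "T0 \<le> Suc n" using t' step(1) by simp
  have smn: "\<alpha> (Suc n) * \<eta> \<le> lam"
  proof -
    have "\<alpha> (Suc n) \<le> \<alpha> t'" by (rule antimonoD[OF \<alpha>_mono]) (use step(1) in simp)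
    then show ?thesis using sm \<eta> by (meson mult_right_mono less_imp_le order_trans)
  qed
  have a1: "AE x in M. nn_cond_exp M (F t') (\<lambda>y. ennreal (exp (\<eta> * L (Suc (Suc n)) y))) x
       = nn_cond_exp M (F t') (nn_cond_exp M (F (Suc n)) (\<lambda>y. ennreal (exp (\<eta> * L (Suc (Suc n)) y)))) x"
    by (rule nn_cond_exp_nested_subalg[OF F_sub subalg_mono]) (use step(1) in auto)
  have st: "AE x in M. nn_cond_exp M (F (Suc n)) (\<lambda>y. ennreal (exp (\<eta> * L (Suc (Suc n)) y))) x
     \<le> ennreal (?r (Suc n) * exp (\<eta> * L (Suc n) x) + D)"
    unfolding D_def E_def by (rule one_step[OF sn \<eta> smn drift[OF sn]])
  have a2: "AE x in M. nn_cond_exp M (F t') (nn_cond_exp M (F (Suc n)) (\<lambda>y. ennreal (exp (\<eta> * L (Suc (Suc n)) y)))) x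
      \<le> nn_cond_exp M (F t') (\<lambda>y. ennreal (?r (Suc n)) * ennreal (exp (\<eta> * L (Suc n) y)) + ennreal D) x"
  proof (rule nn_cond_exp_mono)
    show "AE x in M. nn_cond_exp M (F (Suc n)) (\<lambda>y. ennreal (exp (\<eta> * L (Suc (Suc n)) y))) x
       \<le> ennreal (?r (Suc n)) * ennreal (exp (\<eta> * L (Suc n) x)) + ennreal D"
      using st by eventually_elim (simp only: eqr)
  qed auto
  have a3: "AE x in M. nn_cond_exp M (F t') (\<lambda>y. ennreal (?r (Suc n)) * ennreal (exp (\<eta> * L (Suc n) y))) x
       + nn_cond_exp M (F t') (\<lambda>y. ennreal D) x
     = nn_cond_exp M (F t') (\<lambda>y. ennreal (?r (Suc n)) * ennreal (exp (\<eta> * L (Suc n) y)) + ennreal D) x"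
    by (rule nn_cond_exp_sum) auto
  have a4: "AE x in M. ennreal (?r (Suc n)) * nn_cond_exp M (F t') (\<lambda>y. ennreal (exp (\<eta> * L (Suc n) y))) x
     = nn_cond_exp M (F t') (\<lambda>y. ennreal (?r (Suc n)) * ennreal (exp (\<eta> * L (Suc n) y))) x"
    by (rule nn_cond_exp_prod) auto
  have a5: "AE x in M. ennreal D = nn_cond_exp M (F t') (\<lambda>y. ennreal D) x"
    by (rule nn_cond_exp_F_meas) auto
  from a1 a2 a3 a4 a5 step(3) show ?case
  proof eventually_elim
    case (elim x)
    let ?P = "\<Prod>k=t'..n. ?r k"
    let ?S = "\<Sum>\<tau>=Suc t'..Suc n. \<Prod>k=\<tau>..n. ?r k"
    have "nn_cond_exp M (F t') (\<lambda>y. ennreal (exp (\<eta> * L (Suc (Suc n)) y))) x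
       \<le> ennreal (?r (Suc n)) * nn_cond_exp M (F t') (\<lambda>y. ennreal (exp (\<eta> * L (Suc n) y))) x + ennreal D"
      using elim(1-5) by simp
    also have "\<dots> \<le> ennreal (?r (Suc n)) * ennreal (exp (\<eta> * L t' x) * ?P + D * ?S) + ennreal D"
      using elim(6) by (intro add_mono mult_left_mono) auto
    also have "\<dots> = ennreal (?r (Suc n) * (exp (\<eta> * L t' x) * ?P + D * ?S) + D)"
      using D0 by (intro ennr_aux) (auto intro!: add_nonneg_nonneg mult_nonneg_nonneg prod_nonneg sum_nonneg)
    also have "?r (Suc n) * (exp (\<eta> * L t' x) * ?P + D * ?S) + D
        = exp (\<eta> * L t' x) * (\<Prod>k=t'..Suc n. ?r k) + D * (\<Sum>\<tau>=Suc t'..Suc (Suc n). \<Prod>k=\<tau>..Suc n. ?r k)"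
      using step(1) by (simp add: prod_step sum_prod_step algebra_simps sum_distrib_left)
    finally show ?case .
  qed
qed

end

theorem lemma4:
  fixes M :: "'a measure" and F :: "nat \<Rightarrow> 'a measure"
    and \<alpha> :: "nat \<Rightarrow> real" and L :: "nat \<Rightarrow> 'a \<Rightarrow> real" and Z :: "'a \<Rightarrow> real"
    and T0 :: nat and \<kappa> lam \<eta> :: real and t t' :: nat
  assumes M: "prob_space M"
    and F_sub: "\<And>s. subalgebra M (F s)"
    and F_mono: "\<And>s u. s \<le> u \<Longrightarrow> sets (F s) \<subseteq> sets (F u)"
    and \<alpha>_pos: "\<And>s. \<alpha> s > 0"
    and \<alpha>_mono: "antimono \<alpha>"
    and L_adapted: "\<And>s. L s \<in> borel_measurable (F s)"
    and \<kappa>_pos: "\<kappa> > 0" and lam_pos: "lam > 0"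
    and Z_meas: "Z \<in> borel_measurable M"
    and Z_nonneg: "\<And>x. x \<in> space M \<Longrightarrow> Z x \<ge> 0"
    and Z_exp: "integrable M (\<lambda>x. exp (lam * Z x))"
    and drift: "\<And>s. s \<ge> T0 \<Longrightarrow> AE x in M. L s x \<ge> 0 \<longrightarrow>
                  real_cond_exp M (F s) (\<lambda>y. L (Suc s) y - L s y) x \<le> - \<alpha> s * \<kappa>"
    and tail: "\<And>s z. s \<ge> T0 \<Longrightarrow> z \<ge> 0 \<Longrightarrow> AE x in M.
                  real_cond_exp M (F s)
                    (indicator {y \<in> space M. \<bar>L (Suc s) y - L s y\<bar> \<ge> \<alpha> s * z}) x
                  \<le> measure M {y \<in> space M. Z y \<ge> z}"
    and times: "T0 \<le> t'" "t' \<le> t"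
    and \<eta>_pos: "\<eta> > 0" and \<eta>_small: "\<alpha> t' * \<eta> \<le> lam"
  shows "let D = integral\<^sup>L M (\<lambda>x. exp (lam * Z x));
             E = integral\<^sup>L M (\<lambda>x. (exp (lam * Z x) - 1 - lam * Z x) / lam\<^sup>2);
             \<rho> = (\<lambda>k. exp (- \<alpha> k * \<eta> * \<kappa> + (\<alpha> k)\<^sup>2 * \<eta>\<^sup>2 * E))
         in AE x in M.
              nn_cond_exp M (F t') (\<lambda>y. ennreal (exp (\<eta> * L (Suc t) y))) x
              \<le> ennreal (exp (\<eta> * L t' x) * (\<Prod>k=t'..t. \<rho> k)
                         + D * (\<Sum>\<tau>=Suc t'..Suc t. \<Prod>k=\<tau>..t. \<rho> k))"
proof -
  interpret lem4_setting M F \<alpha> L Z T0 lam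
    apply (rule lem4_setting.intro)
    apply (rule M)
    apply (rule F_sub)
    apply (erule F_mono)
    apply (rule \<alpha>_pos)
    apply (rule L_adapted)
    apply (rule lam_pos)
    apply (rule Z_meas)
    apply (erule Z_nonneg)
    apply (rule Z_exp)
    apply (erule (1) tail)
    done
  show ?thesis unfolding Let_def
    by (rule iterate[OF \<eta>_pos \<alpha>_mono times(1) \<eta>_small drift refl refl times(2)])
qed

end
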